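(* Let $\mathcal H_A,\mathcal H_B$ be finite-dimensional Hilbert spaces and let $\mathsf{Chan}(X)$ denote the set of quantum channels (linear, completely positive, trace-preserving maps) on $\mathsf{Lin}(\mathcal H_X)$. Within $\mathsf{Chan}(\mathcal H_A\otimes\mathcal H_B)$, a channel $\mathcal C$ commutes with every channel of the form $\mathcal A\otimes\mathcal I_B$, $\mathcal A\in\mathsf{Chan}(A)$, if and only if $\mathcal C=\mathcal I_A\otimes\mathcal B$ for some $\mathcal B\in\mathsf{Chan}(B)$. That is, $\{\mathcal A\otimes\mathcal I_B:\mathcal A\in\mathsf{Chan}(A)\}'=\{\mathcal I_A\otimes\mathcal B:\mathcal B\in\mathsf{Chan}(B)\}$.
   Context: $\mathcal I_A,\mathcal I_B$ denote identity maps on $\mathsf{Lin}(\mathcal H_A)$, $\mathsf{Lin}(\mathcal H_B)$. The commutant $M'$ of a set $M$ of channels is the set of all channels in $\mathsf{Chan}(\mathcal H_A\otimes\mathcal H_B)$ commuting (under composition) with every element of $M$. *)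

theory Defs
  imports Complex_Main
begin

text \<open>Finite-dimensional Hilbert space H_X is modelled as complex functions on a finite
  basis type 'a; Lin(H_X) as matrices indexed by 'a (entry M i j).
  H_A \<otimes> H_B has basis 'a \<times> 'b.\<close>

type_synonym 'a sqmat = "'a \<Rightarrow> 'a \<Rightarrow> complex"

definition lin_map :: "('a sqmat \<Rightarrow> 'b sqmat) \<Rightarrow> bool" where
  "lin_map \<Phi> \<longleftrightarrow>
     (\<forall>X Y. \<Phi> (\<lambda>i j. X i j + Y i j) = (\<lambda>i j. \<Phi> X i j + \<Phi> Y i j)) \<and>
     (\<forall>c X. \<Phi> (\<lambda>i j. c * X i j) = (\<lambda>i j. c * \<Phi> X i j))"

text \<open>Positive semidefinite block matrix with k x k blocks (blocks indexed by p, q < k),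
  each block in Lin(H_X): the matrix of an operator on C^k \<otimes> H_X.\<close>
definition psd_block :: "nat \<Rightarrow> (nat \<Rightarrow> nat \<Rightarrow> ('a::finite) sqmat) \<Rightarrow> bool" where
  "psd_block k X \<longleftrightarrow>
     (\<forall>v :: nat \<Rightarrow> 'a \<Rightarrow> complex.
        (let s = (\<Sum>p<k. \<Sum>q<k. \<Sum>i\<in>UNIV. \<Sum>j\<in>UNIV. cnj (v p i) * X p q i j * v q j)
         in Im s = 0 \<and> Re s \<ge> 0))"

text \<open>Complete positivity: id_k \<otimes> \<Phi> is positive for every ancilla dimension k.\<close>
definition completely_positive :: "(('a::finite) sqmat \<Rightarrow> ('b::finite) sqmat) \<Rightarrow> bool" where
  "completely_positive \<Phi> \<longleftrightarrow>
     (\<forall>k X. psd_block k X \<longrightarrow> psd_block k (\<lambda>p q. \<Phi> (X p q)))"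

definition mtrace :: "('a::finite) sqmat \<Rightarrow> complex" where
  "mtrace X = (\<Sum>i\<in>UNIV. X i i)"

definition trace_preserving :: "(('a::finite) sqmat \<Rightarrow> ('b::finite) sqmat) \<Rightarrow> bool" where
  "trace_preserving \<Phi> \<longleftrightarrow> (\<forall>X. mtrace (\<Phi> X) = mtrace X)"

definition channel :: "(('a::finite) sqmat \<Rightarrow> 'a sqmat) \<Rightarrow> bool" where
  "channel \<Phi> \<longleftrightarrow> lin_map \<Phi> \<and> completely_positive \<Phi> \<and> trace_preserving \<Phi>"

definition unit_mat :: "'a \<Rightarrow> 'a \<Rightarrow> 'a sqmat" where
  "unit_mat i j = (\<lambda>r s. if r = i \<and> s = j then 1 else 0)"

definition kron :: "'a sqmat \<Rightarrow> 'b sqmat \<Rightarrow> ('a \<times> 'b) sqmat" where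
  "kron M N = (\<lambda>(i, k) (j, l). M i j * N k l)"

text \<open>Tensor product of maps, the linear extension of E_ij \<otimes> E_kl \<mapsto> A(E_ij) \<otimes> B(E_kl).\<close>
definition tensor_map :: "(('a::finite) sqmat \<Rightarrow> 'a sqmat) \<Rightarrow> (('b::finite) sqmat \<Rightarrow> 'b sqmat)
    \<Rightarrow> ('a \<times> 'b) sqmat \<Rightarrow> ('a \<times> 'b) sqmat" where
  "tensor_map A B X = (\<lambda>r s. \<Sum>i\<in>UNIV. \<Sum>j\<in>UNIV. \<Sum>k\<in>UNIV. \<Sum>l\<in>UNIV.
       X (i, k) (j, l) * kron (A (unit_mat i j)) (B (unit_mat k l)) r s)"

definition commutant :: "((('c::finite) sqmat \<Rightarrow> 'c sqmat) set) \<Rightarrow> ('c sqmat \<Rightarrow> 'c sqmat) set" where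
  "commutant M = {C. channel C \<and> (\<forall>X\<in>M. C \<circ> X = X \<circ> C)}"

end

theory Submission
  imports Defs "HOL-Library.Complex_Order"
begin


lemma lin_scale: "lin_map A \<Longrightarrow> A (\<lambda>i j. c * X i j) = (\<lambda>i j. c * A X i j)"
  unfolding lin_map_def by blast
lemma lin_add: "lin_map A \<Longrightarrow> A (\<lambda>i j. X i j + Y i j) = (\<lambda>i j. A X i j + A Y i j)"
  unfolding lin_map_def by blast
lemma lin_zero: "lin_map A \<Longrightarrow> A (\<lambda>i j. 0) = (\<lambda>i j. 0)"
  using lin_scale[of A 0 "\<lambda>i j. 0"] by simp

lemma lin_sum: assumes "lin_map A" "finite S"
  shows "A (\<lambda>i j. \<Sum>x\<in>S. f x i j) = (\<lambda>i j. \<Sum>x\<in>S. A (f x) i j)"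
  using assms(2)
proof (induction S rule: finite_induct)
  case empty then show ?case using lin_zero[OF assms(1)] by simp
next
  case (insert x F)
  have "A (\<lambda>i j. \<Sum>x\<in>insert x F. f x i j) = A (\<lambda>i j. f x i j + (\<Sum>x\<in>F. f x i j))"
    using insert by simp
  also have "\<dots> = (\<lambda>i j. A (f x) i j + A (\<lambda>i j. \<Sum>x\<in>F. f x i j) i j)"
    using lin_add[OF assms(1), of "f x" "\<lambda>i j. \<Sum>x\<in>F. f x i j"] by simp
  finally show ?case using insert by simp
qed

lemma if_conj0[simp]: "(if P \<and> Q then a else (0::'c::zero)) = (if P then (if Q then a else 0) else 0)"
  by simp
lemma if01_mult[simp]: "(if P then 1 else 0) * (y::'c::comm_semiring_1) = (if P then y else 0)" by simp
lemma mult_if0[simp]: "(x::'c::comm_semiring_1) * (if P then y else 0) = (if P then x * y else 0)" by simp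
lemma mult_if0'[simp]: "(if P then y else 0) * (x::'c::comm_semiring_1) = (if P then y * x else 0)" by simp

lemma sum_if_const[simp]: "(\<Sum>x\<in>S. if P then f x else (0::'c::comm_monoid_add)) = (if P then sum f S else 0)"
  by simp
lemma if01_mult2[simp]: "x * ((if P then 1 else 0) * (y::'c::comm_semiring_1)) = (if P then x * y else 0)" by simp

lemma mult_if01[simp]: "(x::'c::comm_semiring_1) * (if P then 1 else 0) = (if P then x else 0)" by simp

lemma cnj_if0[simp]: "cnj (if P then a else 0) = (if P then cnj a else 0)" by simp

lemma mat_expand: "(M::(_::finite) sqmat) = (\<lambda>i j. \<Sum>i'\<in>UNIV. \<Sum>j'\<in>UNIV. M i' j' * unit_mat i' j' i j)"
  apply (rule ext)+ apply (simp add: unit_mat_def) done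

lemma lin_expand: assumes "lin_map A"
  shows "A M i j = (\<Sum>i'\<in>UNIV. \<Sum>j'\<in>(UNIV::('a::finite) set). M i' j' * A (unit_mat i' j') i j)"
proof -
  have "A M = A (\<lambda>i j. \<Sum>i'\<in>UNIV. \<Sum>j'\<in>UNIV. M i' j' * unit_mat i' j' i j)"
    by (subst mat_expand, rule refl)
  also have "\<dots> = (\<lambda>i j. \<Sum>i'\<in>UNIV. A (\<lambda>i j. \<Sum>j'\<in>UNIV. M i' j' * unit_mat i' j' i j) i j)"
    by (rule lin_sum[OF assms], simp)
  also have "\<dots> = (\<lambda>i j. \<Sum>i'\<in>UNIV. \<Sum>j'\<in>UNIV. A (\<lambda>i j. M i' j' * unit_mat i' j' i j) i j)"
    by (simp add: lin_sum[OF assms])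
  also have "\<dots> = (\<lambda>i j. \<Sum>i'\<in>UNIV. \<Sum>j'\<in>UNIV. M i' j' * A (unit_mat i' j') i j)"
    by (simp add: lin_scale[OF assms, of "M _ _" "unit_mat _ _", simplified])
  finally show ?thesis by simp
qed

lemma tm_id_left: assumes "lin_map B"
  shows "tensor_map id B X (i,k) (j,l) = B (\<lambda>k' l'. X (i,k') (j,l')) k l"
  by (simp add: tensor_map_def kron_def unit_mat_def lin_expand[OF assms, of "\<lambda>k' l'. X (i,k') (j,l')"])

lemma tm_id_right: assumes "lin_map A"
  shows "tensor_map A id X (i,k) (j,l) = A (\<lambda>i' j'. X (i',k) (j',l)) i j"
  by (simp add: tensor_map_def kron_def unit_mat_def lin_expand[OF assms, of "\<lambda>i' j'. X (i',k) (j',l)"])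

definition qf :: "'i set \<Rightarrow> ('i \<Rightarrow> 'i \<Rightarrow> ('a::finite) sqmat) \<Rightarrow> ('i \<Rightarrow> 'a \<Rightarrow> complex) \<Rightarrow> complex" where
  "qf S X v = (\<Sum>p\<in>S. \<Sum>q\<in>S. \<Sum>i\<in>UNIV. \<Sum>j\<in>UNIV. cnj (v p i) * X p q i j * v q j)"
definition psdg :: "'i set \<Rightarrow> ('i \<Rightarrow> 'i \<Rightarrow> ('a::finite) sqmat) \<Rightarrow> bool" where
  "psdg S X \<longleftrightarrow> (\<forall>v. 0 \<le> qf S X v)"

lemma psd_block_iff: "psd_block k X \<longleftrightarrow> psdg {..<k} X"
  unfolding psd_block_def psdg_def qf_def Let_def less_eq_complex_def by auto

lemma sum2_reindex: assumes "bij_betw h A S"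
  shows "(\<Sum>p\<in>A. \<Sum>q\<in>A. F (h p) (h q)) = (\<Sum>s\<in>S. \<Sum>t\<in>S. F s t)"
proof -
  have "(\<Sum>p\<in>A. \<Sum>q\<in>A. F (h p) (h q)) = (\<Sum>p\<in>A. \<Sum>t\<in>S. F (h p) t)"
    by (rule sum.cong[OF refl], rule sum.reindex_bij_betw[OF assms])
  also have "\<dots> = (\<Sum>s\<in>S. \<Sum>t\<in>S. F s t)"
    by (rule sum.reindex_bij_betw[OF assms, of "\<lambda>s. \<Sum>t\<in>S. F s t"])
  finally show ?thesis .
qed

lemma psd_reindex: fixes Z :: "'s \<Rightarrow> 's \<Rightarrow> ('a::finite) sqmat"
  assumes bij: "bij_betw h {..<N} S"
  shows "psd_block N (\<lambda>m m'. Z (h m) (h m')) \<longleftrightarrow> psdg S Z"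
proof -
  have eq: "qf {..<N} (\<lambda>m m'. Z (h m) (h m')) (\<lambda>m. w (h m)) = qf S Z w" for w
    unfolding qf_def by (rule sum2_reindex[OF bij, of "\<lambda>s t. \<Sum>i\<in>UNIV. \<Sum>j\<in>UNIV. cnj (w s i) * Z s t i j * w t j"])
  show ?thesis
  proof
    assume "psd_block N (\<lambda>m m'. Z (h m) (h m'))"
    then show "psdg S Z" unfolding psd_block_iff psdg_def using eq by metis
  next
    assume a: "psdg S Z"
    show "psd_block N (\<lambda>m m'. Z (h m) (h m'))" unfolding psd_block_iff psdg_def
    proof
      fix v :: "nat \<Rightarrow> 'a \<Rightarrow> complex"
      define w where "w = (\<lambda>s. v (inv_into {..<N} h s))"
      have vw: "m \<in> {..<N} \<Longrightarrow> v m = w (h m)" for m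
        unfolding w_def using bij by (simp add: bij_betw_def)
      have "qf {..<N} (\<lambda>m m'. Z (h m) (h m')) v = qf {..<N} (\<lambda>m m'. Z (h m) (h m')) (\<lambda>m. w (h m))"
        unfolding qf_def by (intro sum.cong refl) (simp add: vw)
      then show "0 \<le> qf {..<N} (\<lambda>m m'. Z (h m) (h m')) v" using eq a unfolding psdg_def by simp
    qed
  qed
qed

lemma cp_gen: assumes "completely_positive B" "finite S" "psdg S Z"
  shows "psdg S (\<lambda>s t. B (Z s t))"
proof -
  obtain h where h: "bij_betw h {0..<card S} S" using ex_bij_betw_nat_finite[OF assms(2)] by blast
  then have h': "bij_betw h {..<card S} S" by (simp add: atLeast0LessThan)
  have "psd_block (card S) (\<lambda>m m'. Z (h m) (h m'))" using psd_reindex[OF h', of Z] assms(3) by simp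
  then have "psd_block (card S) (\<lambda>m m'. B (Z (h m) (h m')))"
    using assms(1) unfolding completely_positive_def by blast
  then show ?thesis using psd_reindex[OF h', of "\<lambda>s t. B (Z s t)"] by simp
qed

definition rk :: "real \<Rightarrow> ('a \<Rightarrow> complex) \<Rightarrow> 'a sqmat" where
  "rk c u = (\<lambda>i j. of_real c * u i * cnj (u j))"
definition repl :: "('a::finite) sqmat \<Rightarrow> 'a sqmat \<Rightarrow> 'a sqmat" where
  "repl \<rho> X = (\<lambda>i j. mtrace X * \<rho> i j)"

lemma mtrace_add: "mtrace (\<lambda>i j. X i j + Y i j) = mtrace X + mtrace Y"
  unfolding mtrace_def by (simp add: sum.distrib)
lemma mtrace_scale: "mtrace (\<lambda>i j. c * X i j) = c * mtrace X"
  unfolding mtrace_def by (simp add: sum_distrib_left)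

lemma repl_lin: "lin_map (repl \<rho>)"
  unfolding lin_map_def repl_def by (simp add: mtrace_add mtrace_scale algebra_simps)

lemma repl_tp: "mtrace \<rho> = 1 \<Longrightarrow> trace_preserving (repl \<rho>)"
  unfolding trace_preserving_def repl_def by (simp add: mtrace_scale)

lemma repl_cp: fixes u :: "('a::finite) \<Rightarrow> complex" assumes "c \<ge> 0" shows "completely_positive (repl (rk c u))"
  unfolding completely_positive_def psd_block_iff
proof (intro allI impI)
  fix k and X :: "nat \<Rightarrow> nat \<Rightarrow> 'a sqmat"
  assume X: "psdg {..<k} X"
  show "psdg {..<k} (\<lambda>p q. repl (rk c u) (X p q))" unfolding psdg_def
  proof
    fix v :: "nat \<Rightarrow> 'a \<Rightarrow> complex"
    define d where "d = (\<lambda>p. \<Sum>j\<in>UNIV. cnj (u j) * v p j)"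
    have cd: "cnj (d p) = (\<Sum>i\<in>UNIV. cnj (v p i) * u i)" for p
      unfolding d_def by (simp add: mult.commute)
    define w :: "'a \<Rightarrow> nat \<Rightarrow> 'a \<Rightarrow> complex" where "w = (\<lambda>l p i. if i = l then d p else 0)"
    have qfw: "qf {..<k} X (w l) = (\<Sum>p<k. \<Sum>q<k. cnj (d p) * X p q l l * d q)" for l
      unfolding qf_def w_def by simp
    have "qf {..<k} (\<lambda>p q. repl (rk c u) (X p q)) v
        = (\<Sum>p<k. \<Sum>q<k. of_real c * (cnj (d p) * mtrace (X p q) * d q))"
      unfolding qf_def
    proof (intro sum.cong refl)
      fix p q
      have "of_real c * (cnj (d p) * mtrace (X p q) * d q)
          = of_real c * mtrace (X p q) * ((\<Sum>i\<in>UNIV. cnj (v p i) * u i) * (\<Sum>j\<in>UNIV. cnj (u j) * v q j))"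
        by (simp add: cd d_def mult_ac)
      also have "\<dots> = (\<Sum>i\<in>UNIV. \<Sum>j\<in>UNIV. of_real c * mtrace (X p q) * ((cnj (v p i) * u i) * (cnj (u j) * v q j)))"
        unfolding sum_product by (simp only: sum_distrib_left)
      also have "\<dots> = (\<Sum>i\<in>UNIV. \<Sum>j\<in>UNIV. cnj (v p i) * repl (rk c u) (X p q) i j * v q j)"
        unfolding repl_def rk_def by (intro sum.cong refl) (simp add: mult_ac)
      finally show "(\<Sum>i\<in>UNIV. \<Sum>j\<in>UNIV. cnj (v p i) * repl (rk c u) (X p q) i j * v q j) = of_real c * (cnj (d p) * mtrace (X p q) * d q)"
        by simp
    qed
    also have "\<dots> = of_real c * (\<Sum>l\<in>UNIV. qf {..<k} X (w l))"
      unfolding qfw mtrace_def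
      by (simp add: sum_distrib_left sum_distrib_right sum.swap[of _ UNIV] mult_ac)
    also have "0 \<le> \<dots>"
      using X assms unfolding psdg_def
      by (intro mult_nonneg_nonneg sum_nonneg) (auto simp: less_eq_complex_def)
    finally show "0 \<le> qf {..<k} (\<lambda>p q. repl (rk c u) (X p q)) v" .
  qed
qed

lemma repl_channel: assumes "c \<ge> 0" "mtrace (rk c u) = 1"
  shows "channel (repl (rk c u))"
  unfolding channel_def using repl_lin repl_tp[OF assms(2)] repl_cp[OF assms(1)] by blast



lemma sum_pair: "(\<Sum>x\<in>(UNIV::(('a::finite)\<times>('b::finite)) set). f x) = (\<Sum>i\<in>UNIV. \<Sum>k\<in>UNIV. f (i,k))"
  by (subst UNIV_Times_UNIV[symmetric]) (simp add: sum.cartesian_product)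

lemma tm_id_left': assumes "lin_map B"
  shows "tensor_map id B X = (\<lambda>r s. B (\<lambda>k' l'. X (fst r,k') (fst s,l')) (snd r) (snd s))"
  by (intro ext, simp add: tm_id_left[OF assms, symmetric])

lemma tm_id_right': assumes "lin_map A"
  shows "tensor_map A id X = (\<lambda>r s. A (\<lambda>i' j'. X (i',snd r) (j',snd s)) (fst r) (fst s))"
  by (intro ext, simp add: tm_id_right[OF assms, symmetric])

lemma tm_lin: assumes "lin_map B" shows "lin_map (tensor_map id B)"
  unfolding lin_map_def tm_id_left'[OF assms]
  by (simp add: lin_add[OF assms] lin_scale[OF assms])

lemma tm_tp: assumes "lin_map B" "trace_preserving B" shows "trace_preserving (tensor_map id B)"
  unfolding trace_preserving_def
proof
  fix X :: "('c::finite \<times> 'a::finite) sqmat"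
  have "mtrace (tensor_map id B X) = (\<Sum>i\<in>UNIV. mtrace (B (\<lambda>k' l'. X (i,k') (i,l'))))"
    unfolding tm_id_left'[OF assms(1)] mtrace_def by (simp add: sum_pair)
  also have "\<dots> = (\<Sum>i\<in>UNIV. mtrace (\<lambda>k' l'. X (i,k') (i,l')))"
    using assms(2) unfolding trace_preserving_def by simp
  also have "\<dots> = mtrace X" unfolding mtrace_def by (simp add: sum_pair)
  finally show "mtrace (tensor_map id B X) = mtrace X" .
qed

lemma sum_prod2: "(\<Sum>x\<in>A\<times>B. f x) = (\<Sum>a\<in>A. \<Sum>b\<in>B. f (a,b))"
  by (simp add: sum.cartesian_product)

lemma qf_pair:
  fixes Y :: "nat \<Rightarrow> nat \<Rightarrow> (('a::finite) \<times> ('b::finite)) sqmat"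
  shows "qf {..<k} Y v = qf ({..<k} \<times> UNIV) (\<lambda>(p,i) (q,j). \<lambda>k' l'. Y p q (i,k') (j,l')) (\<lambda>(p,i) k'. v p (i,k'))"
proof -
  have "qf {..<k} Y v = (\<Sum>p<k. \<Sum>q<k. \<Sum>i\<in>UNIV. \<Sum>k'\<in>UNIV. \<Sum>j\<in>UNIV. \<Sum>l'\<in>UNIV.
          cnj (v p (i,k')) * Y p q (i,k') (j,l') * v q (j,l'))"
    unfolding qf_def by (simp add: sum_pair)
  also have "\<dots> = (\<Sum>p<k. \<Sum>i\<in>UNIV. \<Sum>q<k. \<Sum>k'\<in>UNIV. \<Sum>j\<in>UNIV. \<Sum>l'\<in>UNIV.
          cnj (v p (i,k')) * Y p q (i,k') (j,l') * v q (j,l'))"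
    by (intro sum.cong refl, rule sum.swap)
  also have "\<dots> = (\<Sum>p<k. \<Sum>i\<in>UNIV. \<Sum>q<k. \<Sum>j\<in>UNIV. \<Sum>k'\<in>UNIV. \<Sum>l'\<in>UNIV.
          cnj (v p (i,k')) * Y p q (i,k') (j,l') * v q (j,l'))"
    by (intro sum.cong refl, rule sum.swap)
  also have "\<dots> = qf ({..<k} \<times> UNIV) (\<lambda>(p,i) (q,j). \<lambda>k' l'. Y p q (i,k') (j,l')) (\<lambda>(p,i) k'. v p (i,k'))"
    unfolding qf_def sum_prod2 by simp
  finally show ?thesis .
qed

lemma tm_cp: assumes "lin_map B" "completely_positive B" shows "completely_positive (tensor_map id B)"
  unfolding completely_positive_def psd_block_iff
proof (intro allI impI)
  fix k and X :: "nat \<Rightarrow> nat \<Rightarrow> (('c::finite) \<times> ('a::finite)) sqmat"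
  assume X: "psdg {..<k} X"
  define Z where "Z = (\<lambda>(p::nat,i::'c) (q,j). \<lambda>k' l'. X p q (i,k') (j,l'))"
  have Z: "psdg ({..<k} \<times> UNIV) Z" unfolding psdg_def
  proof
    fix w :: "nat \<times> 'c \<Rightarrow> 'a \<Rightarrow> complex"
    have e: "(\<lambda>(p,i) k'. (\<lambda>p x. w (p, fst x) (snd x)) p (i,k')) = w" by auto
    have eq: "qf {..<k} X (\<lambda>p x. w (p, fst x) (snd x)) = qf ({..<k} \<times> UNIV) Z w"
      unfolding Z_def qf_pair[of k X] e ..
    have "0 \<le> qf {..<k} X (\<lambda>p x. w (p, fst x) (snd x))" using X unfolding psdg_def by (rule spec)
    then show "0 \<le> qf ({..<k} \<times> UNIV) Z w" unfolding eq .
  qed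
  have BZ: "psdg ({..<k} \<times> UNIV) (\<lambda>s t. B (Z s t))" by (rule cp_gen[OF assms(2) _ Z]) simp
  have eqz: "(\<lambda>(p,i) (q,j). \<lambda>k' l'. tensor_map id B (X p q) (i,k') (j,l')) = (\<lambda>s t. B (Z s t))"
    unfolding Z_def by (intro ext) (auto simp: tm_id_left[OF assms(1)])
  show "psdg {..<k} (\<lambda>p q. tensor_map id B (X p q))"
    unfolding psdg_def qf_pair[of k "\<lambda>p q. tensor_map id B (X p q)"] eqz
    using BZ unfolding psdg_def by blast
qed

lemma tm_channel: "channel B \<Longrightarrow> channel (tensor_map id B)"
  unfolding channel_def using tm_lin tm_tp tm_cp by blast

lemma sum4_swap: "(\<Sum>a\<in>A. \<Sum>b\<in>B. \<Sum>c\<in>C. \<Sum>d\<in>D. f a b c d) = (\<Sum>c\<in>C. \<Sum>d\<in>D. \<Sum>a\<in>A. \<Sum>b\<in>B. f a b c d)"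
proof -
  have "(\<Sum>a\<in>A. \<Sum>b\<in>B. \<Sum>c\<in>C. \<Sum>d\<in>D. f a b c d) = (\<Sum>a\<in>A. \<Sum>c\<in>C. \<Sum>b\<in>B. \<Sum>d\<in>D. f a b c d)"
    by (intro sum.cong refl, rule sum.swap)
  also have "\<dots> = (\<Sum>c\<in>C. \<Sum>a\<in>A. \<Sum>b\<in>B. \<Sum>d\<in>D. f a b c d)"
    by (rule sum.swap)
  also have "\<dots> = (\<Sum>c\<in>C. \<Sum>a\<in>A. \<Sum>d\<in>D. \<Sum>b\<in>B. f a b c d)"
    by (intro sum.cong refl, rule sum.swap)
  also have "\<dots> = (\<Sum>c\<in>C. \<Sum>d\<in>D. \<Sum>a\<in>A. \<Sum>b\<in>B. f a b c d)"
    by (intro sum.cong refl, rule sum.swap)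
  finally show ?thesis .
qed

lemma tm_commute: assumes "lin_map A" "lin_map B"
  shows "tensor_map A id (tensor_map id B X) = tensor_map id B (tensor_map A id X)"
proof (intro ext)
  fix r s :: "'a::finite \<times> 'b::finite"
  obtain i k j l where rs: "r = (i,k)" "s = (j,l)" by fastforce
  have h3: "B (\<lambda>k' l'. X (i',k') (j',l')) k l = (\<Sum>k'\<in>UNIV. \<Sum>l'\<in>UNIV. X (i',k') (j',l') * B (unit_mat k' l') k l)" for i' j'
    by (rule lin_expand[OF assms(2)])
  have h4: "A (\<lambda>i' j'. X (i',k') (j',l')) i j = (\<Sum>i'\<in>UNIV. \<Sum>j'\<in>UNIV. X (i',k') (j',l') * A (unit_mat i' j') i j)" for k' l'
    by (rule lin_expand[OF assms(1)])
  have "tensor_map A id (tensor_map id B X) (i,k) (j,l) = A (\<lambda>i' j'. B (\<lambda>k' l'. X (i',k') (j',l')) k l) i j"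
    by (simp add: tm_id_right[OF assms(1)] tm_id_left[OF assms(2)])
  also have "\<dots> = (\<Sum>i'\<in>UNIV. \<Sum>j'\<in>UNIV. B (\<lambda>k' l'. X (i',k') (j',l')) k l * A (unit_mat i' j') i j)"
    by (rule lin_expand[OF assms(1)])
  also have "\<dots> = (\<Sum>i'\<in>UNIV. \<Sum>j'\<in>UNIV. \<Sum>k'\<in>UNIV. \<Sum>l'\<in>UNIV. X (i',k') (j',l') * B (unit_mat k' l') k l * A (unit_mat i' j') i j)"
    unfolding h3 by (simp only: sum_distrib_right)
  also have "\<dots> = (\<Sum>k'\<in>UNIV. \<Sum>l'\<in>UNIV. \<Sum>i'\<in>UNIV. \<Sum>j'\<in>UNIV. X (i',k') (j',l') * B (unit_mat k' l') k l * A (unit_mat i' j') i j)"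
    by (rule sum4_swap)
  also have "\<dots> = (\<Sum>k'\<in>UNIV. \<Sum>l'\<in>UNIV. A (\<lambda>i' j'. X (i',k') (j',l')) i j * B (unit_mat k' l') k l)"
    unfolding h4 sum_distrib_right by (simp only: mult_ac)
  also have "\<dots> = B (\<lambda>k' l'. A (\<lambda>i' j'. X (i',k') (j',l')) i j) k l"
    by (rule lin_expand[OF assms(2), symmetric])
  also have "\<dots> = tensor_map id B (tensor_map A id X) (i,k) (j,l)"
    by (simp add: tm_id_right[OF assms(1)] tm_id_left[OF assms(2)])
  finally show "tensor_map A id (tensor_map id B X) r s = tensor_map id B (tensor_map A id X) r s" using rs by simp
qed



definition ptr :: "(('a::finite) \<times> ('b::finite)) sqmat \<Rightarrow> 'b sqmat" where
  "ptr X = (\<lambda>k l. \<Sum>i\<in>UNIV. X (i,k) (i,l))"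

lemma tm_repl: "tensor_map (repl \<rho>) id X = kron \<rho> (ptr X)"
  unfolding tm_id_right'[OF repl_lin] by (intro ext) (simp add: kron_def ptr_def repl_def mtrace_def case_prod_beta mult.commute)

lemma kron_add1: "kron (\<lambda>r s. M r s + N r s) Y = (\<lambda>r s. kron M Y r s + kron N Y r s)"
  unfolding kron_def by (intro ext) (simp add: case_prod_beta algebra_simps)
lemma kron_add2: "kron Y (\<lambda>r s. M r s + N r s) = (\<lambda>r s. kron Y M r s + kron Y N r s)"
  unfolding kron_def by (intro ext) (simp add: case_prod_beta algebra_simps)
lemma kron_scale1: "kron (\<lambda>r s. c * M r s) Y = (\<lambda>r s. c * kron M Y r s)"
  unfolding kron_def by (intro ext) (simp add: case_prod_beta algebra_simps)
lemma kron_scale2: "kron Y (\<lambda>r s. c * M r s) = (\<lambda>r s. c * kron Y M r s)"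
  unfolding kron_def by (intro ext) (simp add: case_prod_beta algebra_simps)
lemma ptr_add: "ptr (\<lambda>r s. M r s + N r s) = (\<lambda>r s. ptr M r s + ptr N r s)"
  unfolding ptr_def by (simp add: sum.distrib)
lemma ptr_scale: "ptr (\<lambda>r s. c * M r s) = (\<lambda>r s. c * ptr M r s)"
  unfolding ptr_def by (simp add: sum_distrib_left)
lemma ptr_kron: "ptr (kron M Y) = (\<lambda>k l. mtrace M * Y k l)"
  unfolding ptr_def kron_def mtrace_def by (simp add: sum_distrib_right)
lemma mtrace_ptr: "mtrace (ptr M) = mtrace M"
  unfolding ptr_def mtrace_def sum_pair by (rule sum.swap)
lemma mtrace_kron: "mtrace (kron M Y) = mtrace M * mtrace Y"
  unfolding kron_def mtrace_def sum_pair sum_product by simp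
lemma mtrace_unit: "mtrace (unit_mat i (i::'a::finite)) = 1"
  unfolding mtrace_def unit_mat_def by simp

definition ev :: "'a \<Rightarrow> 'a \<Rightarrow> complex" where "ev i = (\<lambda>x. if x = i then 1 else 0)"

lemma unit_rk: "unit_mat i i = rk 1 (ev i)"
  unfolding unit_mat_def rk_def ev_def by (intro ext) simp

lemma unit_decomp: assumes "i \<noteq> j"
  shows "unit_mat i j = (\<lambda>r s. rk (1/2) (\<lambda>x. ev i x + ev j x) r s + \<i> * rk (1/2) (\<lambda>x. ev i x + \<i> * ev j x) r s
            + (-(1+\<i>)/2) * (unit_mat i i r s + unit_mat j j r s))"
proof (intro ext)
  fix r s
  show "unit_mat i j r s = rk (1/2) (\<lambda>x. ev i x + ev j x) r s + \<i> * rk (1/2) (\<lambda>x. ev i x + \<i> * ev j x) r s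
            + (-(1+\<i>)/2) * (unit_mat i i r s + unit_mat j j r s)"
    unfolding unit_mat_def rk_def ev_def using assms
    by (cases "r = i"; cases "r = j"; cases "s = i"; cases "s = j") (simp_all add: field_simps)
qed

lemma sum_ev: "(\<Sum>x\<in>UNIV. ev (i::_::finite) x * c) = (c::complex)"
  unfolding ev_def by simp

lemma norm2: assumes "i \<noteq> (j::_::finite)"
  shows "(\<Sum>x\<in>UNIV. (ev i x + a * ev j x) * cnj (ev i x + a * ev j x)) = 1 + a * cnj a"
proof -
  have "(ev i x + a * ev j x) * cnj (ev i x + a * ev j x) = ev i x * 1 + ev j x * (a * cnj a)" for x
    unfolding ev_def using assms by (cases "x = i"; cases "x = j") simp_all
  then show ?thesis by (simp add: sum.distrib sum_ev del: mult_1_right)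
qed

lemma mtrace_rk: "mtrace (rk c u) = of_real c * (\<Sum>x\<in>UNIV. u x * cnj (u x))"
  unfolding mtrace_def rk_def by (simp add: sum_distrib_left mult_ac)

lemma mtrace_P: assumes "i \<noteq> (j::'a::finite)" shows "mtrace (rk (1/2) (\<lambda>x. ev i x + ev j x)) = 1"
  unfolding mtrace_rk using norm2[OF assms, of 1] by simp

lemma mtrace_Q: assumes "i \<noteq> (j::'a::finite)" shows "mtrace (rk (1/2) (\<lambda>x. ev i x + \<i> * ev j x)) = 1"
  unfolding mtrace_rk using norm2[OF assms, of "\<i>"] by simp

lemma qf_kronE: "qf S (\<lambda>p q. kron (unit_mat a a) (M p q)) v = qf S M (\<lambda>p k. v p (a,k))"
  unfolding qf_def kron_def unit_mat_def sum_pair by simp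

lemma comm_sub:
  fixes C :: "(('a::finite) \<times> ('b::finite)) sqmat \<Rightarrow> ('a \<times> 'b) sqmat"
  assumes C: "channel C"
    and comm: "\<And>A. channel (A::'a sqmat \<Rightarrow> 'a sqmat) \<Longrightarrow> C \<circ> tensor_map A id = tensor_map A id \<circ> C"
  shows "\<exists>B. channel B \<and> C = tensor_map id B"
proof -
  have linC: "lin_map C" and cpC: "completely_positive C" and tpC: "trace_preserving C"
    using C unfolding channel_def by auto
  define E0 :: "'a sqmat" where "E0 = unit_mat undefined undefined"
  define Bm :: "'b sqmat \<Rightarrow> 'b sqmat" where "Bm = (\<lambda>Y. ptr (C (kron E0 Y)))"
  have key: "C (kron \<rho> Y) = kron \<rho> (Bm Y)" if "channel (repl \<rho>)" for \<rho> Y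
  proof -
    have "(C \<circ> tensor_map (repl \<rho>) id) (kron E0 Y) = (tensor_map (repl \<rho>) id \<circ> C) (kron E0 Y)"
      using comm[OF that] by simp
    then show ?thesis by (simp add: tm_repl ptr_kron E0_def mtrace_unit Bm_def)
  qed
  have Gadd: "C (kron (\<lambda>r s. M r s + N r s) Y) = kron (\<lambda>r s. M r s + N r s) (Bm Y)"
    if "C (kron M Y) = kron M (Bm Y)" "C (kron N Y) = kron N (Bm Y)" for M N Y
    using that by (simp add: kron_add1 lin_add[OF linC])
  have Gscale: "C (kron (\<lambda>r s. c * M r s) Y) = kron (\<lambda>r s. c * M r s) (Bm Y)"
    if "C (kron M Y) = kron M (Bm Y)" for M Y c
    using that by (simp add: kron_scale1 lin_scale[OF linC])
  have diag: "C (kron (unit_mat i i) Y) = kron (unit_mat i i) (Bm Y)" for i Y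
  proof -
    have "channel (repl (rk 1 (ev i)))"
      by (rule repl_channel) (auto simp: unit_rk[symmetric] mtrace_unit)
    then show ?thesis using key unit_rk by metis
  qed
  have units: "C (kron (unit_mat i j) Y) = kron (unit_mat i j) (Bm Y)" for i j Y
  proof (cases "i = j")
    case True then show ?thesis using diag by simp
  next
    case False
    define P where "P = rk (1/2) (\<lambda>x. ev i x + ev j x)"
    define Q where "Q = rk (1/2) (\<lambda>x. ev i x + \<i> * ev j x)"
    have hP: "C (kron P Y) = kron P (Bm Y)"
      using key repl_channel[of "1/2" "\<lambda>x. ev i x + ev j x"] mtrace_P[OF False] unfolding P_def by simp
    have hQ: "C (kron Q Y) = kron Q (Bm Y)"
      using key repl_channel[of "1/2" "\<lambda>x. ev i x + \<i> * ev j x"] mtrace_Q[OF False] unfolding Q_def by simp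
    have h1: "C (kron (\<lambda>r s. P r s + \<i> * Q r s) Y) = kron (\<lambda>r s. P r s + \<i> * Q r s) (Bm Y)"
      by (rule Gadd[OF _ Gscale[OF hQ]]) (simp add: hP)
    have h2: "C (kron (\<lambda>r s. (-(1+\<i>)/2) * (unit_mat i i r s + unit_mat j j r s)) Y)
           = kron (\<lambda>r s. (-(1+\<i>)/2) * (unit_mat i i r s + unit_mat j j r s)) (Bm Y)"
      by (rule Gscale[OF Gadd[OF diag diag]])
    have "C (kron (\<lambda>r s. (P r s + \<i> * Q r s) + (-(1+\<i>)/2) * (unit_mat i i r s + unit_mat j j r s)) Y)
        = kron (\<lambda>r s. (P r s + \<i> * Q r s) + (-(1+\<i>)/2) * (unit_mat i i r s + unit_mat j j r s)) (Bm Y)"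
      by (rule Gadd[OF h1 h2])
    then show ?thesis using unit_decomp[OF False] unfolding P_def Q_def by simp
  qed
  have Bm_lin: "lin_map Bm"
    unfolding lin_map_def Bm_def
    by (simp add: kron_add2 kron_scale2 lin_add[OF linC] lin_scale[OF linC] ptr_add ptr_scale)
  have decomp: "X = (\<lambda>r s. \<Sum>i\<in>UNIV. \<Sum>j\<in>UNIV. kron (unit_mat i j) (\<lambda>k l. X (i,k) (j,l)) r s)" for X :: "('a \<times> 'b) sqmat"
    by (intro ext) (simp add: kron_def unit_mat_def case_prod_beta)
  have CX: "C X = tensor_map id Bm X" for X
  proof -
    have "C X = C (\<lambda>r s. \<Sum>i\<in>UNIV. \<Sum>j\<in>UNIV. kron (unit_mat i j) (\<lambda>k l. X (i,k) (j,l)) r s)"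
      by (rule arg_cong[where f=C, OF decomp])
    also have "\<dots> = (\<lambda>r s. \<Sum>i\<in>UNIV. \<Sum>j\<in>UNIV. C (kron (unit_mat i j) (\<lambda>k l. X (i,k) (j,l))) r s)"
      by (simp add: lin_sum[OF linC])
    also have "\<dots> = (\<lambda>r s. \<Sum>i\<in>UNIV. \<Sum>j\<in>UNIV. kron (unit_mat i j) (Bm (\<lambda>k l. X (i,k) (j,l))) r s)"
      by (simp add: units)
    also have "\<dots> = tensor_map id Bm X"
      by (intro ext) (simp add: tm_id_left'[OF Bm_lin] kron_def unit_mat_def case_prod_beta)
    finally show ?thesis .
  qed
  have Bm_tp: "trace_preserving Bm"
    unfolding trace_preserving_def Bm_def
    using tpC unfolding trace_preserving_def by (simp add: mtrace_ptr mtrace_kron E0_def mtrace_unit)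
  have Bm_cp: "completely_positive Bm"
    unfolding completely_positive_def psd_block_iff
  proof (intro allI impI)
    fix k and X :: "nat \<Rightarrow> nat \<Rightarrow> 'b sqmat"
    assume X: "psdg {..<k} X"
    have h1: "psdg {..<k} (\<lambda>p q. kron E0 (X p q))"
      using X unfolding psdg_def E0_def qf_kronE by blast
    have h2: "psdg {..<k} (\<lambda>p q. C (kron E0 (X p q)))"
      using cpC h1 unfolding completely_positive_def psd_block_iff by blast
    have h3: "C (kron E0 (X p q)) = kron E0 (Bm (X p q))" for p q
      unfolding E0_def by (rule diag)
    show "psdg {..<k} (\<lambda>p q. Bm (X p q))"
      unfolding psdg_def
    proof
      fix w :: "nat \<Rightarrow> 'b \<Rightarrow> complex"
      define v :: "nat \<Rightarrow> 'a \<times> 'b \<Rightarrow> complex" where "v = (\<lambda>p x. w p (snd x))"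
      have vw: "(\<lambda>p k. v p (undefined, k)) = w" unfolding v_def by simp
      have "qf {..<k} (\<lambda>p q. Bm (X p q)) w = qf {..<k} (\<lambda>p q. C (kron E0 (X p q))) v"
        unfolding h3 unfolding E0_def qf_kronE vw ..
      moreover have "0 \<le> qf {..<k} (\<lambda>p q. C (kron E0 (X p q))) v" using h2 unfolding psdg_def by (rule spec)
      ultimately show "0 \<le> qf {..<k} (\<lambda>p q. Bm (X p q)) w" by simp
    qed
  qed
  have "channel Bm" unfolding channel_def using Bm_lin Bm_tp Bm_cp by blast
  moreover have "C = tensor_map id Bm" using CX by (intro ext) simp
  ultimately show ?thesis by blast
qed

theorem mainTheorem2:
  shows "commutant {tensor_map A (id :: ('b::finite) sqmat \<Rightarrow> 'b sqmat) | A. channel (A :: ('a::finite) sqmat \<Rightarrow> 'a sqmat)}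
         = {tensor_map (id :: 'a sqmat \<Rightarrow> 'a sqmat) B | B. channel (B :: 'b sqmat \<Rightarrow> 'b sqmat)}"
proof
  show "commutant {tensor_map A (id :: 'b sqmat \<Rightarrow> 'b sqmat) | A. channel (A :: 'a sqmat \<Rightarrow> 'a sqmat)}
         \<subseteq> {tensor_map (id :: 'a sqmat \<Rightarrow> 'a sqmat) B | B. channel (B :: 'b sqmat \<Rightarrow> 'b sqmat)}"
  proof
    fix C assume "C \<in> commutant {tensor_map A (id :: 'b sqmat \<Rightarrow> 'b sqmat) | A. channel (A :: 'a sqmat \<Rightarrow> 'a sqmat)}"
    then have C: "channel C" and comm: "\<And>A. channel (A::'a sqmat \<Rightarrow> 'a sqmat) \<Longrightarrow> C \<circ> tensor_map A id = tensor_map A id \<circ> C"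
      unfolding commutant_def by blast+
    show "C \<in> {tensor_map (id :: 'a sqmat \<Rightarrow> 'a sqmat) B | B. channel (B :: 'b sqmat \<Rightarrow> 'b sqmat)}"
      using comm_sub[OF C comm] by blast
  qed
next
  show "{tensor_map (id :: 'a sqmat \<Rightarrow> 'a sqmat) B | B. channel (B :: 'b sqmat \<Rightarrow> 'b sqmat)}
       \<subseteq> commutant {tensor_map A (id :: 'b sqmat \<Rightarrow> 'b sqmat) | A. channel (A :: 'a sqmat \<Rightarrow> 'a sqmat)}"
  proof
    fix C assume "C \<in> {tensor_map (id :: 'a sqmat \<Rightarrow> 'a sqmat) B | B. channel (B :: 'b sqmat \<Rightarrow> 'b sqmat)}"
    then obtain B where B: "channel B" and CB: "C = tensor_map id B" by blast
    have "channel C" using tm_channel[OF B] CB by simp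
    moreover have "C \<circ> X = X \<circ> C" if XM: "X \<in> {tensor_map A (id :: 'b sqmat \<Rightarrow> 'b sqmat) | A. channel (A :: 'a sqmat \<Rightarrow> 'a sqmat)}" for X
    proof -
      obtain A where A: "channel A" and XA: "X = tensor_map A id" using XM by blast
      show ?thesis unfolding XA CB
        using tm_commute[of A B] A B unfolding channel_def by (intro ext) simp
    qed
    ultimately show "C \<in> commutant {tensor_map A (id :: 'b sqmat \<Rightarrow> 'b sqmat) | A. channel (A :: 'a sqmat \<Rightarrow> 'a sqmat)}"
      unfolding commutant_def by blast
  qed
qed

end
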